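(* Let $\alpha>0$, $\sigma>0$, $X_\natural(s,t) = \mathbf{1}\{|s|\le\alpha,|t|\le\alpha\}$, and $$\mathcal{C}(\mathbf{x}) = \Big\langle\nabla_{\mathbf{x}}[\varphi^{(2)}_{\sigma^2}\ast X_\natural](\mathbf{x}),\ \begin{bmatrix}0&-1\\1&0\end{bmatrix}\mathbf{x}\Big\rangle_{\ell^2},\qquad\mathbf{x}\in\mathbb{R}^2.$$ Let $\mathbf{Q}$ be one of the matrices $\begin{bmatrix}1&0\\0&-1\end{bmatrix},\begin{bmatrix}-1&0\\0&1\end{bmatrix},\begin{bmatrix}0&1\\1&0\end{bmatrix},\begin{bmatrix}0&-1\\-1&0\end{bmatrix}$ (the symmetries of the square of determinant $-1$). Then $\mathcal{C}(\mathbf{Q}\mathbf{x}) = -\mathcal{C}(\mathbf{x})$ for all $\mathbf{x}\in\mathbb{R}^2$.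
   Context: $\varphi^{(2)}_{\sigma^2}(\mathbf{x}) = (2\pi\sigma^2)^{-1}e^{-\|\mathbf{x}\|_2^2/(2\sigma^2)}$ and $\ast$ is convolution on $\mathbb{R}^2$. *)

theory Defs
  imports "HOL-Analysis.Analysis"
begin

text \<open>Two-dimensional centred Gaussian density with variance parameter v = sigma^2.\<close>
definition gauss2 :: "real \<Rightarrow> real^2 \<Rightarrow> real" where
  "gauss2 v x = exp (- (norm x)\<^sup>2 / (2 * v)) / (2 * pi * v)"

text \<open>Indicator of the square [-alpha,alpha]^2.\<close>
definition Xnat :: "real \<Rightarrow> real^2 \<Rightarrow> real" where
  "Xnat \<alpha> y = indicator {z :: real^2. \<bar>z$1\<bar> \<le> \<alpha> \<and> \<bar>z$2\<bar> \<le> \<alpha>} y"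

text \<open>Convolution on R^2 (Lebesgue integral).\<close>
definition conv2 :: "(real^2 \<Rightarrow> real) \<Rightarrow> (real^2 \<Rightarrow> real) \<Rightarrow> real^2 \<Rightarrow> real" where
  "conv2 f g x = (\<integral>y. f (x - y) * g y \<partial>lborel)"

text \<open>Gradient: the vector D with GDERIV f x :> D.\<close>
definition grad :: "(real^2 \<Rightarrow> real) \<Rightarrow> real^2 \<Rightarrow> real^2" where
  "grad f x = (THE D. GDERIV f x :> D)"

definition Jrot :: "real^2^2" where
  "Jrot = vector [vector [0, -1], vector [1, 0]]"

definition calC :: "real \<Rightarrow> real \<Rightarrow> real^2 \<Rightarrow> real" where
  "calC \<alpha> \<sigma> x = inner (grad (conv2 (gauss2 (\<sigma>\<^sup>2)) (Xnat \<alpha>)) x) (Jrot *v x)"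

end

theory Submission
  imports Defs
begin

definition Qs :: "(real^2^2) set" where
 "Qs = {vector [vector [1, 0], vector [0, -1]],
              vector [vector [-1, 0], vector [0, 1]],
              vector [vector [0, 1], vector [1, 0]],
              vector [vector [0, -1], vector [-1, 0]]}"

lemma mv2: "(A *v (y::real^2)) $ 1 = A$1$1 * y$1 + A$1$2 * y$2"
           "(A *v (y::real^2)) $ 2 = A$2$1 * y$1 + A$2$2 * y$2"
  by (simp_all add: matrix_vector_mult_def sum_2)

lemma vec2_eq: "(u::real^2) = w \<longleftrightarrow> u$1 = w$1 \<and> u$2 = w$2"
  by (simp add: vec_eq_iff forall_2)

lemma inner2: "inner (u::real^2) w = u$1*w$1 + u$2*w$2"
  by (simp add: inner_vec_def sum_2)

lemma Q_facts:
  assumes "Q \<in> Qs"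
  shows "Q *v (Q *v y) = y" "inner (Q *v u) w = inner u (Q *v w)"
    "\<bar>det Q\<bar> = 1" "inner (Q *v u) (Jrot *v (Q *v z)) = - inner u (Jrot *v z)"
    "inner (Q *v y) (Q *v y) = inner y y"
    "(\<bar>y$1\<bar> \<le> a \<and> \<bar>y$2\<bar> \<le> a) \<Longrightarrow> (\<bar>(Q *v y)$1\<bar> \<le> a \<and> \<bar>(Q *v y)$2\<bar> \<le> a)"
  using assms unfolding Qs_def Jrot_def
  by (auto simp: vec2_eq mv2 inner2 det_2 algebra_simps)

definition Dg :: "real \<Rightarrow> real^2 \<Rightarrow> real^2" where
  "Dg v z = (- gauss2 v z / v) *\<^sub>R z"

lemma gauss2_cont: "v > 0 \<Longrightarrow> continuous_on A (gauss2 v)"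
  unfolding gauss2_def by (intro continuous_intros) auto

lemma Dg_cont: "v > 0 \<Longrightarrow> continuous_on A (Dg v)"
  unfolding Dg_def gauss2_def by (intro continuous_intros) auto

lemma gauss2_deriv:
  assumes "v > 0"
  shows "((\<lambda>x. gauss2 v (x - t)) has_derivative (\<lambda>h. h \<bullet> Dg v (x - t))) (at x within U)"
proof -
  have e: "\<And>z. (norm z)\<^sup>2 = z \<bullet> z" by (simp add: power2_norm_eq_inner)
  show ?thesis
    unfolding gauss2_def Dg_def e
    apply (rule derivative_eq_intros refl | simp)+
    using assms by (auto simp: algebra_simps inner_commute field_simps)
qed

lemma S_eq: "{z :: real^2. \<bar>z$1\<bar> \<le> a \<and> \<bar>z$2\<bar> \<le> a} = cbox (vector [-a,-a]) (vector [a,a])"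
  by (auto simp: mem_box_cart forall_2 abs_le_iff)

lemma conv_eq: assumes "v > 0" shows
  "conv2 (gauss2 v) (Xnat a) x = integral (cbox (vector [-a,-a]) (vector [a,a])) (\<lambda>y. gauss2 v (x - y))"
proof -
  let ?S = "cbox (vector [-a,-a]) (vector [a,a]) :: (real^2) set"
  have ci: "continuous_on ?S (\<lambda>y. gauss2 v (x - y))"
    by (intro continuous_on_compose2[OF gauss2_cont[OF assms]] continuous_intros) auto
  have si: "set_integrable lborel ?S (\<lambda>y. gauss2 v (x - y))"
    unfolding set_integrable_def by (rule borel_integrable_compact[OF compact_cbox ci])
  have "conv2 (gauss2 v) (Xnat a) x = (LINT y : ?S | lborel. gauss2 v (x - y))"
    unfolding conv2_def Xnat_def S_eq set_lebesgue_integral_def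
    by (simp add: mult.commute)
  also have "\<dots> = integral ?S (\<lambda>y. gauss2 v (x - y))"
    by (rule set_borel_integral_eq_integral(2)[OF si])
  finally show ?thesis .
qed

lemma F_gderiv:
  assumes "v > 0"
  shows "GDERIV (conv2 (gauss2 v) (Xnat a)) x0 :> integral (cbox (vector [-a,-a]) (vector [a,a])) (\<lambda>t. Dg v (x0 - t))"
proof -
  let ?S = "cbox (vector [-a,-a]) (vector [a,a]) :: (real^2) set"
  have ce: "conv2 (gauss2 v) (Xnat a) = (\<lambda>x. integral ?S (\<lambda>y. gauss2 v (x - y)))"
    using conv_eq[OF assms] by (intro ext) simp
  have L: "((\<lambda>x. integral ?S (\<lambda>y. gauss2 v (x - y))) has_derivative
       integral ?S (\<lambda>t. blinfun_inner_left (Dg v (x0 - t)))) (at x0 within UNIV)"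
  proof (rule leibniz_rule[where fx = "\<lambda>x t. blinfun_inner_left (Dg v (x - t))"])
    show "((\<lambda>x. gauss2 v (x - t)) has_derivative blinfun_apply (blinfun_inner_left (Dg v (x - t)))) (at x within UNIV)" for x t
      using gauss2_deriv[OF assms] by simp
    show "(\<lambda>y. gauss2 v (x - y)) integrable_on ?S" for x
      by (intro integrable_continuous continuous_on_compose2[OF gauss2_cont[OF assms]] continuous_intros) auto
    show "continuous_on (UNIV \<times> ?S) (\<lambda>(x, t). blinfun_inner_left (Dg v (x - t)))"
      unfolding case_prod_unfold
      by (intro continuous_on_compose2[OF bounded_linear.continuous_on[OF bounded_linear_blinfun_inner_left]]
          continuous_on_compose2[OF Dg_cont[OF assms]] continuous_intros) auto
  qed auto
  have ii: "(\<lambda>t. Dg v (x0 - t)) integrable_on ?S"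
    by (intro integrable_continuous continuous_on_compose2[OF Dg_cont[OF assms]] continuous_intros) auto
  have "integral ?S (\<lambda>t. blinfun_inner_left (Dg v (x0 - t))) = blinfun_inner_left (integral ?S (\<lambda>t. Dg v (x0 - t)))"
    using integral_linear[OF ii bounded_linear_blinfun_inner_left] by (simp add: o_def)
  with L show ?thesis
    unfolding gderiv_def ce by (simp add: inner_commute)
qed

lemma cvec: "continuous_on UNIV (vec :: real \<Rightarrow> real^1)"
  by (simp add: continuous_at_imp_continuous_on continuous_vec)

lemma F_sym:
  assumes "v > 0" "Q \<in> Qs"
  shows "conv2 (gauss2 v) (Xnat a) (Q *v x) = conv2 (gauss2 v) (Xnat a) x"
proof -
  let ?S = "cbox (vector [-a,-a]) (vector [a,a]) :: (real^2) set"
  define k where "k = (\<lambda>y. vec (gauss2 v (x - y)) :: real^1)"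
  have lin: "linear ((*v) Q)" by (rule matrix_vector_mul_linear)
  have img: "(*v) Q ` ?S = ?S"
  proof -
    have sub: "(*v) Q ` ?S \<subseteq> ?S" 
      using Q_facts(6)[OF assms(2)] S_eq[of a, symmetric] by auto
    have "?S \<subseteq> (*v) Q ` ?S"
    proof
      fix y assume "y \<in> ?S"
      then have "Q *v y \<in> ?S" using sub by auto
      then show "y \<in> (*v) Q ` ?S" using Q_facts(1)[OF assms(2), of y] by (metis image_eqI)
    qed
    with sub show ?thesis by blast
  qed
  have ck: "continuous_on ?S k" unfolding k_def
    by (intro continuous_on_compose2[OF cvec] continuous_on_compose2[OF gauss2_cont[OF assms(1)]] continuous_intros) auto
  have ai: "k absolutely_integrable_on ((*v) Q ` ?S)"
    unfolding img by (rule absolutely_integrable_continuous[OF ck])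
  have mQ: "matrix ((*v) Q) = Q" by simp
  have "integral ?S k = integral ?S (k \<circ> (*v) Q)"
    using integral_change_of_variables_linear[OF lin, where f=k and S="?S"] ai img Q_facts(3)[OF assms(2)] mQ by simp
  also have "k \<circ> (*v) Q = (\<lambda>y. vec (gauss2 v (Q *v x - y)))"
  proof
    fix y
    have "Q *v x - y = Q *v (x - Q *v y)"
      using Q_facts(1)[OF assms(2), of y] by (simp add: matrix_vector_right_distrib algebra_simps)
    then have "norm (Q *v x - y) = norm (x - Q *v y)"
      using Q_facts(5)[OF assms(2), of "x - Q *v y"] by (simp add: norm_eq_sqrt_inner)
    then show "(k \<circ> (*v) Q) y = vec (gauss2 v (Q *v x - y))"
      unfolding k_def gauss2_def by simp
  qed
  finally have e: "integral ?S k = integral ?S (\<lambda>y. vec (gauss2 v (Q *v x - y)) :: real^1)" .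
  have b1: "bounded_linear (\<lambda>u::real^1. u $ 1)" by (rule bounded_linear_vec_nth)
  have i1: "k integrable_on ?S" using ck integrable_continuous by blast
  have i2: "(\<lambda>y. vec (gauss2 v (Q *v x - y)) :: real^1) integrable_on ?S"
    by (intro integrable_continuous continuous_on_compose2[OF cvec] continuous_on_compose2[OF gauss2_cont[OF assms(1)]] continuous_intros) auto
  have "integral ?S (\<lambda>y. gauss2 v (x - y)) = integral ?S k $ 1"
    using integral_linear[OF i1 b1] by (simp add: k_def o_def)
  also have "\<dots> = integral ?S (\<lambda>y. gauss2 v (Q *v x - y))"
    using integral_linear[OF i2 b1] e by (simp add: o_def)
  finally show ?thesis using conv_eq[OF assms(1)] by simp
qed

lemma gd_unique:
  assumes "GDERIV f x :> D" "GDERIV f x :> D'"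
  shows "D = D'"
proof -
  have "(\<lambda>h. inner h D) = (\<lambda>h. inner h D')"
    using has_derivative_unique assms unfolding gderiv_def by blast
  then have "inner (D - D') D = inner (D - D') D'" by metis
  then have "inner D (D - D') = inner D' (D - D')" by (simp add: inner_commute)
  then have "inner (D - D') (D - D') = 0" by (simp add: inner_diff_left)
  then show ?thesis by simp
qed

theorem mainTheorem9:
  fixes \<alpha> \<sigma> :: real and Q :: "real^2^2" and x :: "real^2"
  assumes "\<alpha> > 0" and "\<sigma> > 0"
    and "Q \<in> {vector [vector [1, 0], vector [0, -1]],
              vector [vector [-1, 0], vector [0, 1]],
              vector [vector [0, 1], vector [1, 0]],
              vector [vector [0, -1], vector [-1, 0]]}"
  shows "calC \<alpha> \<sigma> (Q *v x) = - calC \<alpha> \<sigma> x"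
proof -
  define v where "v = \<sigma>\<^sup>2"
  have v: "v > 0" using assms(2) by (simp add: v_def)
  have Q: "Q \<in> Qs" using assms(3) unfolding Qs_def .
  define F where "F = conv2 (gauss2 v) (Xnat \<alpha>)"
  have gr: "GDERIV F y :> grad F y" for y
  proof -
    obtain D where D: "GDERIV F y :> D" using F_gderiv[OF v] unfolding F_def by blast
    show ?thesis unfolding grad_def
      by (rule theI[of _ D], rule D, rule gd_unique[OF _ D])
  qed
  have "((\<lambda>y. F (Q *v y)) has_derivative (\<lambda>h. (Q *v h) \<bullet> grad F (Q *v x))) (at x)"
    using has_derivative_compose[OF linear_imp_has_derivative[OF matrix_vector_mul_linear[of Q]]
        gr[of "Q *v x", unfolded gderiv_def]] by simp
  moreover have "(\<lambda>y. F (Q *v y)) = F" using F_sym[OF v Q] unfolding F_def by (intro ext) simp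
  moreover have "(\<lambda>h. (Q *v h) \<bullet> grad F (Q *v x)) = (\<lambda>h. h \<bullet> (Q *v grad F (Q *v x)))"
    using Q_facts(2)[OF Q] by presburger
  ultimately have "GDERIV F x :> Q *v grad F (Q *v x)"
    unfolding gderiv_def by simp
  then have "grad F x = Q *v grad F (Q *v x)" using gr gd_unique by blast
  then have "grad F (Q *v x) = Q *v grad F x" using Q_facts(1)[OF Q] by simp
  then show ?thesis
    unfolding calC_def v_def[symmetric] F_def[symmetric] using Q_facts(4)[OF Q] by simp
qed

end
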